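(* Consider the estimation dynamics $\dot{\hat{\mathbf{z}}}(t)=H\hat{\mathbf{z}}(t)$, $\hat{\mathbf{z}}(t)\in\mathbb{C}^M$, with $H$ and $\mathbf{z}$ as in the context, and let $\mathscr{E}=\mathrm{span}(\mathbf{z})$ and $\mathscr{D}=\mathscr{E}\setminus\{\mathbf{0}\}$. There exists a finite point $\mathbf{z}_\infty\in\mathscr{E}$ to which $\hat{\mathbf{z}}(t)$ converges exponentially (i.e. there are constants $\tau,\sigma>0$ with $\|\hat{\mathbf{z}}(t)-\mathbf{z}_\infty\|\le\tau e^{-\sigma(t-t_0)}\|\hat{\mathbf{z}}(t_0)-\mathbf{z}_\infty\|$ for all $t\ge t_0$) if and only if the edge localization graph $\bar{\mathcal{G}}$ has an oriented spanning tree. Furthermore, $\mathbf{z}_\infty\in\mathscr{D}$ if and only if the initial estimate $\hat{\mathbf{z}}(t_0)$ is not in the column space $\mathrm{C}(H)$ of $H$.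
   Context: Setting. There are $N$ agents $\mathcal{V}=\{1,\dots,N\}$ at distinct positions $\mathbf{p}_u\in\mathbb{R}^2$. The bearing vector is $\mathbf{g}_{vu}=(\mathbf{p}_v-\mathbf{p}_u)/\|\mathbf{p}_v-\mathbf{p}_u\|$ and $\angle\mathbf{g}_{vu}\in[-\pi,\pi)$ its angle in a fixed global frame. For distinct agents $u,v,w$, $\alpha^{u}_{wv}\in[-\pi,\pi)$ denotes the counterclockwise angle at $u$ from $\mathbf{g}_{vu}$ to $\mathbf{g}_{wu}$. A set $\mathcal{S}$ of measured subtended angles is given, with $\alpha^{u}_{wv}\in\mathcal{S}$ iff $\alpha^{u}_{vw}\in\mathcal{S}$. Standing assumption: if an agent measures subtended angles between two or more pairs of other agents, all bearing vectors associated with these measurements are related to each other through them (so that the subtended angle at that agent between any two of these agents is determined by its measurements). The communication graph $\mathcal{G}=(\mathcal{V},\mathcal{E})$ has as edges exactly the ordered pairs $(u,v),(v,u),(u,w),(w,u)$ for all $\alpha^{u}_{wv}\in\mathcal{S}$; it is symmetric and assumed connected. Edge localization graph $\bar{\mathcal{G}}=(\bar{\mathcal{V}},\bar{\mathcal{E}})$: for each $(u,v)\in\mathcal{E}$ with no $w$ such that $\alpha^{v}_{wu}\in\mathcal{S}$, introduce a new virtual vertex $\bar v^{u}$ (distinct for distinct such pairs), co-located with agent $v$; $\bar{\mathcal{E}}$ is obtained from $\mathcal{E}$ by replacing each such pair $(u,v),(v,u)$ by $(u,\bar v^{u}),(\bar v^{u},u)$; $\bar{\mathcal{V}}$ consists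 of the agents that measure at least one subtended angle together with all virtual vertices. For $a\in\bar{\mathcal{V}}$ let $\rho(a)$ be the real agent it is (co-located with): $\rho(\bar v^u)=v$, $\rho(v)=v$. The directed line graph $L(\bar{\mathcal{G}})$ has vertex set $\bar{\mathcal{E}}$ and an edge $(e_1,e_2)$ whenever the head of $e_1$ equals the tail of $e_2$. The localization interaction graph $\mathcal{G}'=(\mathcal{V}',\mathcal{E}')$ is $L(\bar{\mathcal{G}})$ with vertices relabelled by a bijection onto $\mathcal{V}'=\{1,\dots,M\}$, $M=|\bar{\mathcal{E}}|$; vertex $k$ corresponding to $(a,b)\in\bar{\mathcal{E}}$ is the edge agent $k$; its neighbor set is $\mathcal{N}_k=\{j:(k,j)\in\mathcal{E}'\}$. For edge agent $k$ corresponding to $(a,b)$ set $\theta_k=\angle\mathbf{g}_{\rho(b)\rho(a)}$ and $z_k=e^{\mathrm{i}\theta_k}$, $\mathbf{z}=[z_1,\dots,z_M]^T$. For $j\in\mathcal{N}_k$ with $j$ corresponding to $(b,c)$, write $u=\rho(a)$, $v=\rho(b)$, $w=\rho(c)$ and set $\theta_{jk}=\mathrm{PV}(\alpha^{v}_{wu}+\pi)$ if $w\neq u$ and $\theta_{jk}=-\pi$ if $w=u$, where $\mathrm{PV}(\theta)=[(\theta+\pi)\bmod 2\pi]-\pi$. The matrix $H$ has entries $[H]_{kk}=-|\mathcal{N}_k|$, $[H]_{kj}=e^{-\mathrm{i}\theta_{jk}}$ if $j\in\mathcal{N}_k$, and $0$ otherwise; equivalently $\dot{\hat z}_k=\sum_{j\in\mathcal{N}_k}(e^{-\mathrm{i}\theta_{jk}}\hat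 z_j-\hat z_k)$. An oriented spanning tree of a directed graph with root $r$ is an acyclic subgraph containing all vertices in which every vertex other than $r$ has a directed path to $r$. *)

theory Defs
  imports "HOL-Analysis.Analysis"
begin

text \<open>Principal value: PV(theta) = ((theta + pi) mod 2 pi) - pi, in [-pi, pi).\<close>
definition PV :: "real \<Rightarrow> real" where
  "PV \<theta> = \<theta> - 2 * pi * of_int \<lfloor>(\<theta> + pi) / (2 * pi)\<rfloor>"

text \<open>Positions in R^2 are represented as complex numbers. bearing p v u is g_vu.\<close>
definition bearing :: "(nat \<Rightarrow> complex) \<Rightarrow> nat \<Rightarrow> nat \<Rightarrow> complex" where
  "bearing p v u = (p v - p u) / complex_of_real (cmod (p v - p u))"

text \<open>Angle of g_vu in the global frame, taken in [-pi, pi).\<close>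
definition bangle :: "(nat \<Rightarrow> complex) \<Rightarrow> nat \<Rightarrow> nat \<Rightarrow> real" where
  "bangle p v u = PV (Arg (bearing p v u))"

text \<open>subangle p u w v is alpha^u_{wv}: the counterclockwise angle at u from g_vu to g_wu,
  in [-pi, pi).\<close>
definition subangle :: "(nat \<Rightarrow> complex) \<Rightarrow> nat \<Rightarrow> nat \<Rightarrow> nat \<Rightarrow> real" where
  "subangle p u w v = PV (bangle p w u - bangle p v u)"

text \<open>The set S of measured subtended angles is a set of triples; (u,w,v) in S
  encodes that alpha^u_{wv} is in S.\<close>

definition commE :: "(nat \<times> nat \<times> nat) set \<Rightarrow> (nat \<times> nat) set" where
  "commE S = {e. \<exists>u w v. (u, w, v) \<in> S \<and> e \<in> {(u, v), (v, u), (u, w), (w, u)}}"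

text \<open>meas_with S v u: there is w with alpha^v_{wu} in S.\<close>
definition meas_with :: "(nat \<times> nat \<times> nat) set \<Rightarrow> nat \<Rightarrow> nat \<Rightarrow> bool" where
  "meas_with S v u = (\<exists>w. (v, w, u) \<in> S)"

definition measures :: "(nat \<times> nat \<times> nat) set \<Rightarrow> nat \<Rightarrow> bool" where
  "measures S v = (\<exists>w u. (v, w, u) \<in> S)"

text \<open>Vertices of the edge localization graph: Ag v is the agent v,
  Vir u v is the virtual vertex bar v^u (co-located with v).\<close>
datatype vtx = Ag nat | Vir nat nat

fun rho :: "vtx \<Rightarrow> nat" where
  "rho (Ag v) = v"
| "rho (Vir u v) = v"

definition Ebar :: "(nat \<times> nat \<times> nat) set \<Rightarrow> (vtx \<times> vtx) set" where
  "Ebar S =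
     {(Ag u, Ag v) | u v. (u, v) \<in> commE S \<and> meas_with S v u \<and> meas_with S u v}
   \<union> {(Ag u, Vir u v) | u v. (u, v) \<in> commE S \<and> \<not> meas_with S v u}
   \<union> {(Vir u v, Ag u) | u v. (u, v) \<in> commE S \<and> \<not> meas_with S v u}"

definition Vbar :: "(nat \<times> nat \<times> nat) set \<Rightarrow> vtx set" where
  "Vbar S = {Ag v | v. measures S v}
          \<union> {Vir u v | u v. (u, v) \<in> commE S \<and> \<not> meas_with S v u}"

text \<open>Oriented spanning tree of the directed graph (V, E) with root r.\<close>
definition is_oriented_spanning_tree :: "'a set \<Rightarrow> ('a \<times> 'a) set \<Rightarrow> 'a \<Rightarrow> ('a \<times> 'a) set \<Rightarrow> bool" where
  "is_oriented_spanning_tree V E r T \<longleftrightarrow>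
     r \<in> V \<and> T \<subseteq> E \<and> acyclic T \<and> (\<forall>v\<in>V. v \<noteq> r \<longrightarrow> (v, r) \<in> T\<^sup>+)"

definition has_oriented_spanning_tree :: "'a set \<Rightarrow> ('a \<times> 'a) set \<Rightarrow> bool" where
  "has_oriented_spanning_tree V E \<longleftrightarrow> (\<exists>r T. is_oriented_spanning_tree V E r T)"

text \<open>Edge agents: lab is the bijection from the index type onto Ebar
  (edge agent k corresponds to the edge lab k = (a,b)).\<close>

definition nbrs :: "('m \<Rightarrow> vtx \<times> vtx) \<Rightarrow> 'm \<Rightarrow> 'm set" where
  "nbrs lab k = {j. fst (lab j) = snd (lab k)}"

definition theta :: "(nat \<Rightarrow> complex) \<Rightarrow> ('m \<Rightarrow> vtx \<times> vtx) \<Rightarrow> 'm \<Rightarrow> real" where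
  "theta p lab k = bangle p (rho (snd (lab k))) (rho (fst (lab k)))"

definition zvec :: "(nat \<Rightarrow> complex) \<Rightarrow> ('m::finite \<Rightarrow> vtx \<times> vtx) \<Rightarrow> complex ^ 'm" where
  "zvec p lab = (\<chi> k. cis (theta p lab k))"

text \<open>theta_rel p lab j k is theta_{jk}, for j in nbrs lab k.\<close>
definition theta_rel :: "(nat \<Rightarrow> complex) \<Rightarrow> ('m \<Rightarrow> vtx \<times> vtx) \<Rightarrow> 'm \<Rightarrow> 'm \<Rightarrow> real" where
  "theta_rel p lab j k =
     (let u = rho (fst (lab k)); v = rho (snd (lab k)); w = rho (snd (lab j))
      in if w \<noteq> u then PV (subangle p v w u + pi) else - pi)"

definition Hmat :: "(nat \<Rightarrow> complex) \<Rightarrow> ('m::finite \<Rightarrow> vtx \<times> vtx) \<Rightarrow> complex ^ 'm ^ 'm" where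
  "Hmat p lab = (\<chi> k j. if j = k then - of_nat (card (nbrs lab k))
                        else if j \<in> nbrs lab k then cis (- theta_rel p lab j k) else 0)"

text \<open>zh solves d/dt zh = H zh for t \<ge> t0.\<close>
definition is_solution :: "complex ^ 'm ^ 'm \<Rightarrow> (real \<Rightarrow> complex ^ 'm) \<Rightarrow> real \<Rightarrow> bool" where
  "is_solution H zh t0 \<longleftrightarrow>
     (\<forall>t\<ge>t0. (zh has_vector_derivative (H *v zh t)) (at t within {t0..}))"

definition exp_conv :: "(real \<Rightarrow> complex ^ 'm) \<Rightarrow> real \<Rightarrow> complex ^ 'm \<Rightarrow> bool" where
  "exp_conv zh t0 zinf \<longleftrightarrow>
     (\<exists>\<tau>>0. \<exists>\<sigma>>0. \<forall>t\<ge>t0.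
        norm (zh t - zinf) \<le> \<tau> * exp (- \<sigma> * (t - t0)) * norm (zh t0 - zinf))"

text \<open>Complex span of a vector.\<close>
definition cspan1 :: "complex ^ 'm \<Rightarrow> (complex ^ 'm) set" where
  "cspan1 z = {c *s z | c. True}"

definition colspace :: "complex ^ 'm ^ 'm \<Rightarrow> (complex ^ 'm) set" where
  "colspace H = {H *v x | x. True}"

end

theory Submission imports Defs begin

lemma commE_sym: "(u, v) \<in> commE S \<Longrightarrow> (v, u) \<in> commE S"
  unfolding commE_def by blast

definition Lap :: "('m \<Rightarrow> vtx \<times> vtx) \<Rightarrow> ('m \<Rightarrow> complex) \<Rightarrow> 'm \<Rightarrow> complex" where
  "Lap lab f k = (\<Sum>j\<in>nbrs lab k. f j - f k)"

lemma tree_exists: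
  assumes r: "r \<in> V" and reach: "\<forall>v\<in>V. (v, r) \<in> E\<^sup>*"
  shows "has_oriented_spanning_tree V E"
proof -
  define d where "d v = (LEAST n. (v, r) \<in> E ^^ n)" for v
  define T where "T = {(u, v). (u, v) \<in> E \<and> d v < d u}"
  have acyc: "acyclic T"
  proof -
    have "T\<inverse> \<subseteq> inv_image less_than d" unfolding T_def by auto
    then have "wf (T\<inverse>)" by (rule wf_subset[OF wf_inv_image[OF wf_less_than]])
    then have "acyclic (T\<inverse>)" by (rule wf_acyclic)
    then show ?thesis by (simp add: acyclic_converse)
  qed
  have main: "\<And>u. (u, r) \<in> E\<^sup>* \<Longrightarrow> u \<noteq> r \<Longrightarrow> (u, r) \<in> T\<^sup>+"
  proof -
    fix u
    show "(u, r) \<in> E\<^sup>* \<Longrightarrow> u \<noteq> r \<Longrightarrow> (u, r) \<in> T\<^sup>+"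
    proof (induction "d u" arbitrary: u rule: less_induct)
      case less
      from rtrancl_imp_relpow[OF less.prems(1)] obtain n where "(u, r) \<in> E ^^ n" by blast
      then have du: "(u, r) \<in> E ^^ d u" unfolding d_def by (rule LeastI)
      have "d u \<noteq> 0" using du less.prems(2) by (metis relpow_0_E)
      then obtain m where m: "d u = Suc m" by (cases "d u") auto
      from relpow_Suc_D2[OF du[unfolded m]] obtain v where v: "(u, v) \<in> E" "(v, r) \<in> E ^^ m" by blast
      have dv: "d v \<le> m" unfolding d_def using v(2) by (rule Least_le)
      then have uvT: "(u, v) \<in> T" unfolding T_def using v(1) m by auto
      show ?case
      proof (cases "v = r")
        case True
        then show ?thesis using uvT by auto
      next
        case False
        have "(v, r) \<in> T\<^sup>+" using less.hyps[of v] dv m False relpow_imp_rtrancl[OF v(2)] by auto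
        then show ?thesis using uvT by (meson trancl_into_trancl2)
      qed
    qed
  qed
  have "is_oriented_spanning_tree V E r T"
    unfolding is_oriented_spanning_tree_def using r acyc main reach by (auto simp: T_def)
  then show ?thesis unfolding has_oriented_spanning_tree_def by blast
qed

lemma inner_sq_deriv:
  fixes g :: "real \<Rightarrow> complex"
  assumes "(g has_vector_derivative g') (at t within s)"
  shows "((\<lambda>t. (g t - c) \<bullet> (g t - c)) has_real_derivative (2 * ((g t - c) \<bullet> g'))) (at t within s)"
proof -
  have d: "((\<lambda>t. g t - c) has_derivative (\<lambda>h. h *\<^sub>R g')) (at t within s)"
    using assms unfolding has_vector_derivative_def by (auto intro!: derivative_eq_intros)
  have "((\<lambda>t. (g t - c) \<bullet> (g t - c)) has_derivative
      (\<lambda>h. (g t - c) \<bullet> (h *\<^sub>R g') + (h *\<^sub>R g') \<bullet> (g t - c))) (at t within s)"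
    by (rule has_derivative_inner[OF d d])
  then show ?thesis unfolding has_field_derivative_def
    by (rule has_derivative_eq_rhs) (simp add: fun_eq_iff inner_commute algebra_simps)
qed

lemma deriv_nonpos_decr:
  fixes g :: "real \<Rightarrow> real"
  assumes d: "\<And>t. t \<ge> t0 \<Longrightarrow> (g has_real_derivative g' t) (at t within {t0..})"
    and n: "\<And>t. t \<ge> t0 \<Longrightarrow> g' t \<le> 0" and t: "t \<ge> t0"
  shows "g t \<le> g t0"
proof -
  have "\<exists>x\<in>{t0..t}. g t - g t0 = (\<lambda>h. h * g' x) (t - t0)"
  proof (rule mvt_very_simple[OF t])
    fix x assume "t0 \<le> x" "x \<le> t"
    then have "(g has_real_derivative g' x) (at x within {t0..t})"
      using d[of x] by (rule_tac has_field_derivative_subset) auto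
    then show "(g has_derivative (\<lambda>h. h * g' x)) (at x within {t0..t})"
      unfolding has_field_derivative_def by (rule has_derivative_eq_rhs) (auto simp: fun_eq_iff)
  qed
  then obtain x where "x \<in> {t0..t}" "g t - g t0 = (t - t0) * g' x" by auto
  moreover have "(t - t0) * g' x \<le> 0" using n[of x] t \<open>x \<in> {t0..t}\<close> by (simp add: mult_nonneg_nonpos)
  ultimately show ?thesis by simp
qed

lemma deriv_zero_const:
  fixes f :: "real \<Rightarrow> 'a::real_normed_vector"
  assumes d: "\<And>t. t \<ge> t0 \<Longrightarrow> (f has_vector_derivative 0) (at t within {t0..})" and t: "t \<ge> t0"
  shows "f t = f t0"
proof -
  have "\<exists>c. \<forall>x\<in>{t0..}. f x = c"
  proof (rule has_derivative_zero_constant)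
    show "convex {t0..}" by (rule convex_real_interval)
    fix x assume "x \<in> {t0..}"
    then show "(f has_derivative (\<lambda>h. 0)) (at x within {t0..})"
      using d[of x] unfolding has_vector_derivative_def by simp
  qed
  then show ?thesis using t by auto
qed

lemma norm_vec_sq: "(norm (v :: complex ^ 'n))\<^sup>2 = (\<Sum>i\<in>UNIV. (cmod (v $ i))\<^sup>2)"
  unfolding norm_vec_def L2_set_def by (simp add: sum_nonneg)

lemma decay_zero:
  fixes a A \<sigma> t0 :: real
  assumes a: "a \<ge> 0" and s: "\<sigma> > 0" and b: "\<forall>t\<ge>t0. a \<le> A * exp (- \<sigma> * (t - t0))"
  shows "a = 0"
proof (rule ccontr)
  assume "a \<noteq> 0"
  then have a0: "a > 0" using a by simp
  have "a \<le> A * exp (- \<sigma> * (t0 - t0))" using b by auto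
  then have A0: "A > 0" using a0 by simp
  define t where "t = t0 + max 0 (ln (A / a) + 1) / \<sigma>"
  have tt: "t \<ge> t0" unfolding t_def using s by simp
  have st: "\<sigma> * (t - t0) = max 0 (ln (A / a) + 1)" unfolding t_def using s by simp
  have "A * exp (- \<sigma> * (t - t0)) \<le> A * exp (- (ln (A / a) + 1))"
    using st A0 by (intro mult_left_mono) auto
  also have "\<dots> = A * (a / A) * exp (- 1)"
    using A0 a0 by (simp add: exp_diff exp_minus field_simps)
  also have "\<dots> = a * exp (- 1)" using A0 by simp
  also have "\<dots> < a" using a0 by simp
  finally show False using b tt by fastforce
qed

lemma exp_conv_const:
  assumes "exp_conv (\<lambda>t. x) t0 zinf"
  shows "x = zinf"
proof -
  from assms obtain \<tau> \<sigma> where s: "\<sigma> > 0" and b: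
    "\<forall>t\<ge>t0. norm (x - zinf) \<le> \<tau> * exp (- \<sigma> * (t - t0)) * norm (x - zinf)"
    unfolding exp_conv_def by blast
  have "\<forall>t\<ge>t0. norm (x - zinf) \<le> (\<tau> * norm (x - zinf)) * exp (- \<sigma> * (t - t0))"
    using b by (simp add: algebra_simps)
  from decay_zero[OF norm_ge_zero s this] show ?thesis by simp
qed

locale thm_setting =
  fixes N :: nat and p :: "nat \<Rightarrow> complex" and S :: "(nat \<times> nat \<times> nat) set"
    and lab :: "'m::finite \<Rightarrow> vtx \<times> vtx"
  assumes distinct_pos: "inj_on p {1..N}"
    and S_agents: "S \<subseteq> {(u, w, v). u \<in> {1..N} \<and> w \<in> {1..N} \<and> v \<in> {1..N}
                                   \<and> u \<noteq> w \<and> u \<noteq> v \<and> w \<noteq> v}"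
    and S_sym: "\<forall>u w v. (u, w, v) \<in> S \<longleftrightarrow> (u, v, w) \<in> S"
    and lab_bij: "bij_betw lab UNIV (Ebar S)"
begin

lemma commE_props: "(u, v) \<in> commE S \<Longrightarrow> u \<noteq> v \<and> u \<in> {1..N} \<and> v \<in> {1..N}"
proof -
  assume "(u, v) \<in> commE S"
  then obtain a w b where t: "(a, w, b) \<in> S" and e: "(u, v) \<in> {(a, b), (b, a), (a, w), (w, a)}"
    unfolding commE_def by blast
  from subsetD[OF S_agents t] have "a \<in> {1..N} \<and> w \<in> {1..N} \<and> b \<in> {1..N} \<and> a \<noteq> w \<and> a \<noteq> b \<and> w \<noteq> b"
    by blast
  with e show ?thesis by auto
qed

lemma commE_meas: "(u, v) \<in> commE S \<Longrightarrow> meas_with S u v \<or> meas_with S v u"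
  using S_sym unfolding commE_def meas_with_def by blast

lemma Ebar_sym: "(a, b) \<in> Ebar S \<Longrightarrow> (b, a) \<in> Ebar S"
  unfolding Ebar_def using commE_sym by blast

lemma Ebar_rho: "(a, b) \<in> Ebar S \<Longrightarrow> rho a \<noteq> rho b \<and> rho a \<in> {1..N} \<and> rho b \<in> {1..N}"
proof -
  assume "(a, b) \<in> Ebar S"
  then obtain u v where "(u, v) \<in> commE S" and
    "(a, b) = (Ag u, Ag v) \<or> (a, b) = (Ag u, Vir u v) \<or> (a, b) = (Vir u v, Ag u)"
    unfolding Ebar_def by blast
  then show ?thesis using commE_props[of u v] by auto
qed

lemma Ebar_Vbar: "(a, b) \<in> Ebar S \<Longrightarrow> a \<in> Vbar S \<and> b \<in> Vbar S"
proof -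
  have m: "measures S u" if "(u, v) \<in> commE S" "\<not> meas_with S v u" for u v
    using commE_meas[OF that(1)] that(2) unfolding measures_def meas_with_def by blast
  assume "(a, b) \<in> Ebar S"
  then show ?thesis unfolding Ebar_def Vbar_def
    using m by (auto simp: meas_with_def measures_def)
qed

lemma Vbar_in: "v \<in> Vbar S \<Longrightarrow> \<exists>a. (a, v) \<in> Ebar S"
proof -
  assume "v \<in> Vbar S"
  then consider (A) x where "v = Ag x" "measures S x"
    | (B) u x where "v = Vir u x" "(u, x) \<in> commE S" "\<not> meas_with S x u"
    unfolding Vbar_def by blast
  then show ?thesis
  proof cases
    case (A)
    then obtain w u where wu: "(x, w, u) \<in> S" unfolding measures_def by blast
    then have c: "(u, x) \<in> commE S" unfolding commE_def by blast
    have mx: "meas_with S x u" using wu unfolding meas_with_def by blast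
    show ?thesis
    proof (cases "meas_with S u x")
      case True
      then show ?thesis using A c mx unfolding Ebar_def by blast
    next
      case False
      then have "(Vir x u, Ag x) \<in> Ebar S" using commE_sym[OF c] unfolding Ebar_def by blast
      then show ?thesis using A by blast
    qed
  next
    case (B)
    then show ?thesis unfolding Ebar_def by blast
  qed
qed

lemma lab_in: "lab k \<in> Ebar S"
  using lab_bij bij_betwE by blast

lemma lab_inj: "lab k = lab j \<Longrightarrow> k = j"
  using lab_bij unfolding bij_betw_def inj_on_def by blast

lemma lab_surj: "e \<in> Ebar S \<Longrightarrow> \<exists>k. lab k = e"
  using lab_bij unfolding bij_betw_def by (metis UNIV_I image_iff)

definition rev :: "'m \<Rightarrow> 'm" where
  "rev k = (SOME j. lab j = prod.swap (lab k))"

lemma lab_rev: "lab (rev k) = prod.swap (lab k)"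
proof -
  obtain a b where ab: "lab k = (a, b)" by fastforce
  have "(b, a) \<in> Ebar S" using Ebar_sym lab_in ab by metis
  then obtain j where "lab j = (b, a)" using lab_surj by blast
  then show ?thesis unfolding rev_def using ab by (metis (mono_tags, lifting) prod.swap_def someI_ex fst_conv snd_conv)
qed

lemma rev_rev: "rev (rev k) = k"
  using lab_rev by (metis lab_inj swap_swap)

lemma rev_nbrs: "rev k \<in> nbrs lab k"
  unfolding nbrs_def using lab_rev by simp

lemma nbrs_ne: "nbrs lab k \<noteq> {}"
  using rev_nbrs by blast

lemma not_self_nbr: "k \<notin> nbrs lab k"
proof
  assume "k \<in> nbrs lab k"
  then have "fst (lab k) = snd (lab k)" unfolding nbrs_def by simp
  moreover have "(fst (lab k), snd (lab k)) \<in> Ebar S" using lab_in[of k] by simp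
  ultimately show False using Ebar_rho[of "fst (lab k)" "snd (lab k)"] by simp
qed

lemma card_nbrs_pos: "card (nbrs lab k) > 0"
  using rev_nbrs[of k] by (metis card_gt_0_iff empty_iff finite)

lemma card_in_out: "card {k. snd (lab k) = b} = card {j. fst (lab j) = b}"
proof (rule bij_betw_same_card[of rev])
  show "bij_betw rev {k. snd (lab k) = b} {j. fst (lab j) = b}"
    by (rule bij_betw_byWitness[of _ rev]) (auto simp: rev_rev lab_rev)
qed

definition wt :: "'m \<Rightarrow> real" where
  "wt k = 1 / real (card (nbrs lab k))"

lemma wt_pos: "wt k > 0"
  unfolding wt_def using card_nbrs_pos by simp

lemma wt_card: "wt k * real (card (nbrs lab k)) = 1"
  unfolding wt_def using card_nbrs_pos[of k] nbrs_ne[of k] by simp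

lemma wt_sum_in: "(\<Sum>k | j \<in> nbrs lab k. wt k) = 1"
proof -
  let ?b = "fst (lab j)"
  have eq: "{k. j \<in> nbrs lab k} = {k. snd (lab k) = ?b}" unfolding nbrs_def by auto
  have nb: "nbrs lab k = {j'. fst (lab j') = ?b}" if "snd (lab k) = ?b" for k
    unfolding nbrs_def using that by auto
  have "(\<Sum>k | j \<in> nbrs lab k. wt k) = (\<Sum>k | snd (lab k) = ?b. 1 / real (card {j'. fst (lab j') = ?b}))"
    unfolding eq wt_def by (rule sum.cong) (auto simp: nb)
  also have "\<dots> = real (card {k. snd (lab k) = ?b}) / real (card {j'. fst (lab j') = ?b})"
    by simp
  also have "\<dots> = 1"
  proof -
    have "card {j'. fst (lab j') = ?b} > 0"
      by (metis (mono_tags, lifting) card_gt_0_iff empty_iff finite mem_Collect_eq)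
    then show ?thesis using card_in_out[of ?b] by auto
  qed
  finally show ?thesis .
qed

lemma wt_sum_swap:
  fixes f :: "'m \<Rightarrow> 'a::real_vector"
  shows "(\<Sum>k\<in>UNIV. wt k *\<^sub>R (\<Sum>j\<in>nbrs lab k. f j)) = (\<Sum>j\<in>UNIV. f j)"
proof -
  have "(\<Sum>k\<in>UNIV. wt k *\<^sub>R (\<Sum>j\<in>nbrs lab k. f j))
        = (\<Sum>k\<in>UNIV. \<Sum>j\<in>UNIV. (if j \<in> nbrs lab k then wt k *\<^sub>R f j else 0))"
    by (simp add: scaleR_sum_right sum.If_cases Int_absorb1)
  also have "\<dots> = (\<Sum>j\<in>UNIV. \<Sum>k\<in>UNIV. (if j \<in> nbrs lab k then wt k *\<^sub>R f j else 0))"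
    by (rule sum.swap)
  also have "\<dots> = (\<Sum>j\<in>UNIV. (\<Sum>k | j \<in> nbrs lab k. wt k) *\<^sub>R f j)"
    by (simp add: scaleR_sum_left sum.If_cases)
  also have "\<dots> = (\<Sum>j\<in>UNIV. f j)" by (simp add: wt_sum_in)
  finally show ?thesis .
qed

lemma unit_cnj: "cmod a = 1 \<Longrightarrow> a * cnj a = 1"
proof -
  assume "cmod a = 1"
  then show ?thesis using complex_norm_square[of a] by simp
qed

lemma cis_PV: "cis (PV x) = cis x"
proof -
  have "cis (PV x) = cis x * cis (2 * pi * of_int (- \<lfloor>(x + pi) / (2 * pi)\<rfloor>))"
    unfolding PV_def cis_mult by (simp add: algebra_simps)
  also have "\<dots> = cis x" by (subst cis_multiple_2pi) auto
  finally show ?thesis .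
qed

lemma cis_bangle: "p v \<noteq> p u \<Longrightarrow> cis (bangle p v u) = sgn (p v - p u)"
proof -
  assume "p v \<noteq> p u"
  then have ne: "sgn (p v - p u) \<noteq> 0" by (simp add: sgn_zero_iff)
  have "bearing p v u = sgn (p v - p u)" unfolding bearing_def by (simp add: sgn_eq)
  then show ?thesis unfolding bangle_def cis_PV using cis_Arg[OF ne] by simp
qed

definition sg :: "nat \<Rightarrow> nat \<Rightarrow> complex" where
  "sg v u = sgn (p v - p u)"

lemma p_ne: "u \<in> {1..N} \<Longrightarrow> v \<in> {1..N} \<Longrightarrow> u \<noteq> v \<Longrightarrow> p u \<noteq> p v"
  using inj_onD[OF distinct_pos] by blast

lemma sg_unit: "u \<in> {1..N} \<Longrightarrow> v \<in> {1..N} \<Longrightarrow> u \<noteq> v \<Longrightarrow> cmod (sg v u) = 1"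
proof -
  assume "u \<in> {1..N}" "v \<in> {1..N}" "u \<noteq> v"
  then have "p v - p u \<noteq> 0" using p_ne by force
  then show ?thesis unfolding sg_def by (simp add: norm_sgn)
qed

lemma sg_swap: "sg u v = - sg v u"
  unfolding sg_def by (metis minus_diff_eq sgn_minus)

lemma z_comp: "zvec p lab $ k = sg (rho (snd (lab k))) (rho (fst (lab k)))"
proof -
  have "(fst (lab k), snd (lab k)) \<in> Ebar S" using lab_in[of k] by simp
  from Ebar_rho[OF this] have "p (rho (snd (lab k))) \<noteq> p (rho (fst (lab k)))"
    using p_ne by metis
  then show ?thesis unfolding zvec_def theta_def sg_def by (simp add: cis_bangle)
qed

lemma z_unit: "cmod (zvec p lab $ k) = 1"
proof -
  have "(fst (lab k), snd (lab k)) \<in> Ebar S" using lab_in[of k] by simp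
  from Ebar_rho[OF this] show ?thesis unfolding z_comp using sg_unit by blast
qed

lemma z_cnj: "zvec p lab $ k * cnj (zvec p lab $ k) = 1"
  using unit_cnj[OF z_unit] .

lemma z_ne: "zvec p lab $ k \<noteq> 0"
  using z_unit[of k] by auto

lemma rel_cis: 
  assumes j: "j \<in> nbrs lab k"
  shows "cis (- theta_rel p lab j k) = zvec p lab $ k * cnj (zvec p lab $ j)"
proof -
  define u where "u = rho (fst (lab k))"
  define v where "v = rho (snd (lab k))"
  define w where "w = rho (snd (lab j))"
  have v2: "v = rho (fst (lab j))" using j unfolding v_def nbrs_def by simp
  have e1: "(fst (lab k), snd (lab k)) \<in> Ebar S" using lab_in[of k] by simp
  have e2: "(fst (lab j), snd (lab j)) \<in> Ebar S" using lab_in[of j] by simp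
  have uv: "u \<noteq> v" "u \<in> {1..N}" "v \<in> {1..N}" using Ebar_rho[OF e1] u_def v_def by auto
  have vw: "v \<noteq> w" "w \<in> {1..N}" using Ebar_rho[OF e2] v2 w_def by auto
  have pne: "p a \<noteq> p b" if "a \<in> {1..N}" "b \<in> {1..N}" "a \<noteq> b" for a b
    using p_ne that by blast
  have zk: "zvec p lab $ k = sg v u" unfolding z_comp u_def v_def ..
  have zj: "zvec p lab $ j = sg w v" unfolding z_comp w_def v2 ..
  have A1: "sg v u * cnj (sg v u) = 1" using sg_unit[of u v] uv by (intro unit_cnj) auto
  have B1: "sg w v * cnj (sg w v) = 1" using sg_unit[of v w] uv vw by (intro unit_cnj) auto
  show ?thesis
  proof (cases "w = u")
    case True
    then have "theta_rel p lab j k = - pi" unfolding theta_rel_def Let_def u_def v_def w_def by simp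
    then have "cis (- theta_rel p lab j k) = -1" by simp
    also have "\<dots> = sg v u * cnj (sg u v)" using A1 sg_swap[of u v] by simp
    finally show ?thesis unfolding zk zj True .
  next
    case False
    then have th: "theta_rel p lab j k = PV (subangle p v w u + pi)"
      unfolding theta_rel_def Let_def u_def v_def w_def by simp
    have c1: "cis (bangle p w v) = sg w v" using pne[of w v] vw uv cis_bangle sg_def by auto
    have c2: "cis (bangle p u v) = sg u v" using pne[of u v] uv cis_bangle sg_def by auto
    have "cis (theta_rel p lab j k) = - (sg w v / sg u v)"
      unfolding th cis_PV subangle_def minus_cis[symmetric] cis_divide[symmetric] c1 c2 ..
    also have "\<dots> = sg w v * cnj (sg v u)"
    proof -
      have inv: "inverse (sg v u) = cnj (sg v u)" using A1 by (rule inverse_unique)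
      show ?thesis unfolding sg_swap[of u v] by (simp add: divide_inverse inv)
    qed
    finally have "cis (theta_rel p lab j k) = sg w v * cnj (sg v u)" .
    then have "cis (- theta_rel p lab j k) = cnj (sg w v * cnj (sg v u))"
      by (metis cis_cnj)
    then show ?thesis unfolding zk zj by (simp add: mult.commute)
  qed
qed

lemma H_apply:
  "(Hmat p lab *v x) $ k = zvec p lab $ k * Lap lab (\<lambda>j. cnj (zvec p lab $ j) * x $ j) k"
proof -
  let ?z = "zvec p lab"
  have nk: "k \<notin> nbrs lab k" by (rule not_self_nbr)
  have "(Hmat p lab *v x) $ k = (\<Sum>j\<in>UNIV. (if j = k then - of_nat (card (nbrs lab k)) * x $ k else 0)
          + (if j \<in> nbrs lab k then cis (- theta_rel p lab j k) * x $ j else 0))"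
    unfolding matrix_vector_mult_def Hmat_def using nk by (auto intro!: sum.cong)
  also have "\<dots> = - of_nat (card (nbrs lab k)) * x $ k + (\<Sum>j\<in>nbrs lab k. cis (- theta_rel p lab j k) * x $ j)"
    by (simp add: sum.distrib sum.If_cases)
  also have "\<dots> = - of_nat (card (nbrs lab k)) * x $ k + (\<Sum>j\<in>nbrs lab k. ?z $ k * cnj (?z $ j) * x $ j)"
    by (simp add: rel_cis)
  also have "\<dots> = ?z $ k * Lap lab (\<lambda>j. cnj (?z $ j) * x $ j) k"
  proof -
    have "?z $ k * Lap lab (\<lambda>j. cnj (?z $ j) * x $ j) k
       = (\<Sum>j\<in>nbrs lab k. ?z $ k * cnj (?z $ j) * x $ j) - of_nat (card (nbrs lab k)) * ((?z $ k * cnj (?z $ k)) * x $ k)"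
      unfolding Lap_def by (simp add: sum_distrib_left sum_subtractf algebra_simps)
    then show ?thesis by (simp add: z_cnj)
  qed
  finally show ?thesis .
qed

definition En :: "('m \<Rightarrow> complex) \<Rightarrow> real" where
  "En f = (\<Sum>k\<in>UNIV. wt k * (\<Sum>j\<in>nbrs lab k. (cmod (f j - f k))\<^sup>2))"

lemma En_nonneg: "En f \<ge> 0"
  unfolding En_def using wt_pos by (intro sum_nonneg mult_nonneg_nonneg) (auto intro: less_imp_le)

lemma inner_id: "2 * (a \<bullet> (b - a)) = (cmod b)\<^sup>2 - (cmod a)\<^sup>2 - (cmod (b - a))\<^sup>2"
  for a b :: complex
  by (simp add: power2_norm_eq_inner inner_diff_left inner_diff_right inner_commute algebra_simps)

lemma energy_id: "(\<Sum>k\<in>UNIV. wt k * (2 * (e k \<bullet> Lap lab e k))) = - En e"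
proof -
  have "(\<Sum>k\<in>UNIV. wt k * (2 * (e k \<bullet> Lap lab e k)))
      = (\<Sum>k\<in>UNIV. wt k * (\<Sum>j\<in>nbrs lab k. (cmod (e j))\<^sup>2 - (cmod (e k))\<^sup>2 - (cmod (e j - e k))\<^sup>2))"
    unfolding Lap_def inner_sum_right sum_distrib_left inner_id ..
  also have "\<dots> = (\<Sum>k\<in>UNIV. wt k *\<^sub>R (\<Sum>j\<in>nbrs lab k. (cmod (e j))\<^sup>2))
       - (\<Sum>k\<in>UNIV. (wt k * real (card (nbrs lab k))) * (cmod (e k))\<^sup>2) - En e"
    unfolding En_def by (simp add: sum_subtractf sum_distrib_left sum.distrib algebra_simps)
  also have "\<dots> = - En e" unfolding wt_sum_swap wt_card by simp
  finally show ?thesis .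
qed

lemma Lap_mean: "(\<Sum>k\<in>UNIV. of_real (wt k) * Lap lab f k) = 0"
proof -
  have "(\<Sum>k\<in>UNIV. of_real (wt k) * Lap lab f k)
      = (\<Sum>k\<in>UNIV. wt k *\<^sub>R (\<Sum>j\<in>nbrs lab k. f j)) - (\<Sum>k\<in>UNIV. of_real (wt k * real (card (nbrs lab k))) * f k)"
    unfolding Lap_def by (simp add: sum_subtractf sum_distrib_left algebra_simps scaleR_conv_of_real)
  also have "\<dots> = 0" unfolding wt_sum_swap wt_card by simp
  finally show ?thesis .
qed

definition Rl :: "('m \<times> 'm) set" where
  "Rl = {(k, j). j \<in> nbrs lab k}"

lemma nbr_bound: "j \<in> nbrs lab k \<Longrightarrow> (cmod (f j - f k))\<^sup>2 \<le> real CARD('m) * En f"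
proof -
  assume j: "j \<in> nbrs lab k"
  have "wt k * (cmod (f j - f k))\<^sup>2 \<le> wt k * (\<Sum>j\<in>nbrs lab k. (cmod (f j - f k))\<^sup>2)"
    using j wt_pos[of k] by (intro mult_left_mono member_le_sum) auto
  also have "\<dots> \<le> En f"
  proof -
    have nn: "0 \<le> wt x * (\<Sum>j\<in>nbrs lab x. (cmod (f j - f x))\<^sup>2)" for x
      using wt_pos[of x] by (intro mult_nonneg_nonneg sum_nonneg) auto
    show ?thesis unfolding En_def
      by (rule member_le_sum[of k UNIV "\<lambda>k. wt k * (\<Sum>j\<in>nbrs lab k. (cmod (f j - f k))\<^sup>2)"])
         (use nn in auto)
  qed
  finally have a: "wt k * (cmod (f j - f k))\<^sup>2 \<le> En f" .
  have c: "real (card (nbrs lab k)) \<le> real CARD('m)" by (simp add: card_mono)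
  have "(cmod (f j - f k))\<^sup>2 = real (card (nbrs lab k)) * (wt k * (cmod (f j - f k))\<^sup>2)"
    using wt_card[of k] by (simp add: algebra_simps)
  also have "\<dots> \<le> real (card (nbrs lab k)) * En f"
    using a by (intro mult_left_mono) auto
  also have "\<dots> \<le> real CARD('m) * En f"
    using c En_nonneg[of f] by (intro mult_right_mono) auto
  finally show ?thesis .
qed

lemma sq_bound: "(a + b)\<^sup>2 \<le> 2 * a\<^sup>2 + 2 * b\<^sup>2" for a b :: real
proof -
  have "0 \<le> (a - b)\<^sup>2" by simp
  then show ?thesis unfolding power2_sum power2_diff by linarith
qed

lemma path_bound:
  assumes "(k, l) \<in> Rl\<^sup>*"
  shows "\<exists>C\<ge>0. \<forall>f. (cmod (f k - f l))\<^sup>2 \<le> C * En f"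
  using assms
proof (induction rule: rtrancl_induct)
  case base
  then show ?case by (intro exI[of _ 0]) simp
next
  case (step l m)
  then obtain C where C: "C \<ge> 0" "\<And>f. (cmod (f k - f l))\<^sup>2 \<le> C * En f" by blast
  have m: "m \<in> nbrs lab l" using step(2) unfolding Rl_def by simp
  show ?case
  proof (intro exI[of _ "2 * C + 2 * real CARD('m)"] conjI allI)
    fix f :: "'m \<Rightarrow> complex"
    have e: "f k - f m = (f k - f l) + (f l - f m)" by simp
    have t: "cmod (f k - f m) \<le> cmod (f k - f l) + cmod (f m - f l)"
      unfolding e using norm_triangle_ineq[of "f k - f l" "f l - f m"] norm_minus_commute[of "f l" "f m"]
      by simp
    have "(cmod (f k - f m))\<^sup>2 \<le> (cmod (f k - f l) + cmod (f m - f l))\<^sup>2"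
      using t by (intro power_mono) auto
    also have "\<dots> \<le> 2 * (cmod (f k - f l))\<^sup>2 + 2 * (cmod (f m - f l))\<^sup>2"
      by (rule sq_bound)
    also have "\<dots> \<le> 2 * (C * En f) + 2 * (real CARD('m) * En f)"
      using C(2)[of f] nbr_bound[OF m, of f] by linarith
    finally show "(cmod (f k - f m))\<^sup>2 \<le> (2 * C + 2 * real CARD('m)) * En f"
      by (simp add: algebra_simps)
  qed (use C in auto)
qed

lemma unif_bound:
  assumes conn: "\<forall>k l. (k, l) \<in> Rl\<^sup>*"
  shows "\<exists>C\<ge>0. \<forall>f k l. (cmod (f k - f l))\<^sup>2 \<le> C * En f"
proof -
  have "\<forall>k l. \<exists>C. C \<ge> 0 \<and> (\<forall>f. (cmod (f k - f l))\<^sup>2 \<le> C * En f)"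
    using path_bound conn by blast
  then obtain Cf where Cf: "\<And>k l. Cf k l \<ge> 0" "\<And>k l f. (cmod (f k - f l))\<^sup>2 \<le> Cf k l * En f"
    by metis
  define C where "C = (\<Sum>k\<in>UNIV. \<Sum>l\<in>UNIV. Cf k l)"
  have le: "Cf k l \<le> C" for k l
  proof -
    have "Cf k l \<le> (\<Sum>l\<in>UNIV. Cf k l)" using Cf(1) by (intro member_le_sum) auto
    also have "\<dots> \<le> C" unfolding C_def using Cf(1)
      by (intro member_le_sum[of k UNIV "\<lambda>k. \<Sum>l\<in>UNIV. Cf k l"]) (auto intro: sum_nonneg)
    finally show ?thesis .
  qed
  show ?thesis
  proof (intro exI[of _ C] conjI allI)
    show "C \<ge> 0" unfolding C_def using Cf(1) by (auto intro: sum_nonneg)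
    fix f k l
    show "(cmod (f k - f l))\<^sup>2 \<le> C * En f"
      using Cf(2)[of f k l] mult_right_mono[OF le[of k l] En_nonneg[of f]] by linarith
  qed
qed

definition Wt :: real where "Wt = (\<Sum>k\<in>UNIV. wt k)"

lemma Wt_pos: "Wt > 0"
  unfolding Wt_def using wt_pos by (intro sum_pos) auto

definition mean :: "('m \<Rightarrow> complex) \<Rightarrow> complex" where
  "mean f = (\<Sum>k\<in>UNIV. of_real (wt k) * f k) / of_real Wt"

lemma mean_bound:
  assumes C: "C \<ge> 0" "\<And>f k l. (cmod (f k - f l))\<^sup>2 \<le> C * En f"
  shows "(\<Sum>k\<in>UNIV. wt k * (cmod (f k - mean f))\<^sup>2) \<le> Wt * (C * En f)"
proof -
  define B where "B = sqrt (C * En f)"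
  have B: "cmod (f k - f l) \<le> B" for k l
    unfolding B_def using C(2)[of f k l] by (simp add: real_le_rsqrt)
  have each: "(cmod (f k - mean f))\<^sup>2 \<le> C * En f" for k
  proof -
    have s1: "(\<Sum>l\<in>UNIV. of_real (wt l) * (f k - f l)) = f k * of_real Wt - (\<Sum>l\<in>UNIV. of_real (wt l) * f l)"
      unfolding Wt_def by (simp add: algebra_simps sum_subtractf sum_distrib_left)
    have "f k - mean f = (\<Sum>l\<in>UNIV. of_real (wt l) * (f k - f l)) / of_real Wt"
      using Wt_pos unfolding s1 mean_def by (simp add: diff_divide_distrib)
    then have "cmod (f k - mean f) = cmod (\<Sum>l\<in>UNIV. of_real (wt l) * (f k - f l)) / Wt"
      using Wt_pos by (simp add: norm_divide)
    also have "\<dots> \<le> (\<Sum>l\<in>UNIV. wt l * B) / Wt"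
    proof (intro divide_right_mono)
      have "cmod (\<Sum>l\<in>UNIV. of_real (wt l) * (f k - f l)) \<le> (\<Sum>l\<in>UNIV. cmod (of_real (wt l) * (f k - f l)))"
        by (rule norm_sum)
      also have "\<dots> \<le> (\<Sum>l\<in>UNIV. wt l * B)"
        using wt_pos B by (intro sum_mono) (simp add: norm_mult mult_left_mono less_imp_le)
      finally show "cmod (\<Sum>l\<in>UNIV. of_real (wt l) * (f k - f l)) \<le> (\<Sum>l\<in>UNIV. wt l * B)" .
    qed (use Wt_pos in auto)
    also have "\<dots> = B" using Wt_pos unfolding Wt_def by (simp add: sum_distrib_right[symmetric])
    finally have "cmod (f k - mean f) \<le> B" .
    then have "(cmod (f k - mean f))\<^sup>2 \<le> B\<^sup>2" by (intro power_mono) auto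
    also have "B\<^sup>2 = C * En f" unfolding B_def using C(1) En_nonneg[of f] by simp
    finally show ?thesis .
  qed
  have "(\<Sum>k\<in>UNIV. wt k * (cmod (f k - mean f))\<^sup>2) \<le> (\<Sum>k\<in>UNIV. wt k * (C * En f))"
    using wt_pos each by (intro sum_mono mult_left_mono) (auto intro: less_imp_le)
  also have "\<dots> = Wt * (C * En f)" unfolding Wt_def by (simp add: sum_distrib_right)
  finally show ?thesis .
qed

lemma Ebar_sym_rel: "sym (Ebar S)"
  using Ebar_sym by (auto intro: symI)

lemma walk:
  assumes "(b, c) \<in> (Ebar S)\<^sup>*"
  shows "snd (lab k) = b \<Longrightarrow> \<exists>k'. snd (lab k') = c \<and> (k, k') \<in> Rl\<^sup>*"
  using assms
proof (induction rule: rtrancl_induct)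
  case base
  then show ?case by blast
next
  case (step b' c)
  then obtain k' where k': "snd (lab k') = b'" "(k, k') \<in> Rl\<^sup>*" by blast
  obtain j where j: "lab j = (b', c)" using lab_surj[OF step(2)] by blast
  have "(k', j) \<in> Rl" unfolding Rl_def nbrs_def using j k' by simp
  then show ?case using j k' by (metis rtrancl.rtrancl_into_rtrancl snd_conv)
qed

lemma tree_conn:
  assumes "has_oriented_spanning_tree (Vbar S) (Ebar S)"
  shows "\<forall>k l. (k, l) \<in> Rl\<^sup>*"
proof (intro allI)
  fix k l
  from assms obtain r T where r: "r \<in> Vbar S" and TE: "T \<subseteq> Ebar S"
    and reach: "\<forall>v\<in>Vbar S. v \<noteq> r \<longrightarrow> (v, r) \<in> T\<^sup>+"
    unfolding has_oriented_spanning_tree_def is_oriented_spanning_tree_def by blast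
  have toR: "(v, r) \<in> (Ebar S)\<^sup>*" if "v \<in> Vbar S" for v
  proof (cases "v = r")
    case False
    then have "(v, r) \<in> T\<^sup>+" using reach that by blast
    then have "(v, r) \<in> (Ebar S)\<^sup>+" using trancl_mono TE by blast
    then show ?thesis by auto
  qed simp
  have fromR: "(r, v) \<in> (Ebar S)\<^sup>*" if "v \<in> Vbar S" for v
    using toR[OF that] sym_rtrancl[OF Ebar_sym_rel] unfolding sym_def by blast
  have e1: "(fst (lab k), snd (lab k)) \<in> Ebar S" "(fst (lab l), snd (lab l)) \<in> Ebar S"
    using lab_in[of k] lab_in[of l] by auto
  have "(snd (lab k), fst (lab l)) \<in> (Ebar S)\<^sup>*"
    using toR fromR Ebar_Vbar[OF e1(1)] Ebar_Vbar[OF e1(2)] by (meson rtrancl_trans)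
  from walk[OF this] obtain k' where k': "snd (lab k') = fst (lab l)" "(k, k') \<in> Rl\<^sup>*" by blast
  have "(k', l) \<in> Rl" unfolding Rl_def nbrs_def using k' by simp
  then show "(k, l) \<in> Rl\<^sup>*" using k' by (meson rtrancl.rtrancl_into_rtrancl)
qed

lemma x_from_y: "x $ k = zvec p lab $ k * (cnj (zvec p lab $ k) * x $ k)"
  by (simp add: z_cnj mult.assoc[symmetric])

lemma no_tree_solution:
  assumes "\<not> has_oriented_spanning_tree (Vbar S) (Ebar S)"
  shows "\<exists>x. Hmat p lab *v x = 0 \<and> x \<notin> cspan1 (zvec p lab)"
proof -
  obtain k0 :: 'm where True by blast
  define r0 where "r0 = snd (lab k0)"
  define A where "A = {k. (snd (lab k), r0) \<in> (Ebar S)\<^sup>*}"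
  have closed: "k \<in> A \<longleftrightarrow> j \<in> A" if j: "j \<in> nbrs lab k" for k j
  proof
    have ej: "(snd (lab j), fst (lab j)) \<in> Ebar S" "(fst (lab j), snd (lab j)) \<in> Ebar S"
      using lab_in[of j] Ebar_sym by (metis prod.collapse)+
    have fj: "fst (lab j) = snd (lab k)" using j unfolding nbrs_def by simp
    show "k \<in> A \<Longrightarrow> j \<in> A" unfolding A_def using ej(1) fj by (simp add: converse_rtrancl_into_rtrancl)
    show "j \<in> A \<Longrightarrow> k \<in> A" unfolding A_def using ej(2) fj by (metis converse_rtrancl_into_rtrancl mem_Collect_eq)
  qed
  define x where "x = (\<chi> k. if k \<in> A then zvec p lab $ k else 0)"
  have y: "cnj (zvec p lab $ k) * x $ k = (if k \<in> A then 1 else 0)" for k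
    unfolding x_def by (simp add: z_cnj mult.commute)
  have Hx: "Hmat p lab *v x = 0"
  proof (rule vec_eq_iff[THEN iffD2], intro allI)
    fix k
    have "Lap lab (\<lambda>j. cnj (zvec p lab $ j) * x $ j) k = 0"
      unfolding Lap_def y using closed[of _ k] by (intro sum.neutral) auto
    then show "(Hmat p lab *v x) $ k = 0 $ k" unfolding H_apply by simp
  qed
  have "x \<notin> cspan1 (zvec p lab)"
  proof
    assume "x \<in> cspan1 (zvec p lab)"
    then obtain c where c: "x = c *s zvec p lab" unfolding cspan1_def by blast
    have "k0 \<in> A" unfolding A_def r0_def by simp
    then have "x $ k0 = zvec p lab $ k0" unfolding x_def by simp
    moreover have "x $ k0 = c * zvec p lab $ k0" using c by simp
    ultimately have "zvec p lab $ k0 = c * zvec p lab $ k0" by simp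
    then have c1: "c = 1" using z_ne[of k0] by simp
    have allA: "k \<in> A" for k
    proof (rule ccontr)
      assume "k \<notin> A"
      then have "x $ k = 0" unfolding x_def by simp
      moreover have "x $ k = c * zvec p lab $ k" using c by simp
      ultimately have "0 = c * zvec p lab $ k" by simp
      then show False using c1 z_ne[of k] by simp
    qed
    have "has_oriented_spanning_tree (Vbar S) (Ebar S)"
    proof (rule tree_exists[of r0])
      have "(fst (lab k0), snd (lab k0)) \<in> Ebar S" using lab_in[of k0] by simp
      then show "r0 \<in> Vbar S" unfolding r0_def using Ebar_Vbar by blast
      show "\<forall>v\<in>Vbar S. (v, r0) \<in> (Ebar S)\<^sup>*"
      proof
        fix v assume "v \<in> Vbar S"
        then obtain a where "(a, v) \<in> Ebar S" using Vbar_in by blast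
        then obtain k where "lab k = (a, v)" using lab_surj by blast
        then show "(v, r0) \<in> (Ebar S)\<^sup>*" using allA[of k] unfolding A_def by simp
      qed
    qed
    then show False using assms by blast
  qed
  then show ?thesis using Hx by blast
qed

lemma kernel_span:
  assumes conn: "\<forall>k l. (k, l) \<in> Rl\<^sup>*" and Hx: "Hmat p lab *v x = 0"
  shows "x \<in> cspan1 (zvec p lab)"
proof -
  define y where "y k = cnj (zvec p lab $ k) * x $ k" for k
  have L0: "Lap lab y k = 0" for k
  proof -
    have "zvec p lab $ k * Lap lab y k = (Hmat p lab *v x) $ k" unfolding H_apply y_def ..
    also have "\<dots> = 0" using Hx by simp
    finally have "zvec p lab $ k * Lap lab y k = 0" .
    then show ?thesis using z_ne[of k] by simp
  qed
  have E0: "En y = 0" using energy_id[of y] L0 by simp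
  obtain C where C: "C \<ge> 0" "\<And>f k l. (cmod (f k - f l))\<^sup>2 \<le> C * En f"
    using unif_bound[OF conn] by blast
  obtain k0 :: 'm where True by blast
  have yc: "y k = y k0" for k using C(2)[of y k k0] E0 by simp
  have "x = y k0 *s zvec p lab"
  proof (rule vec_eq_iff[THEN iffD2], intro allI)
    fix k
    have "x $ k = zvec p lab $ k * y k" unfolding y_def by (rule x_from_y)
    then show "x $ k = (y k0 *s zvec p lab) $ k" using yc[of k] by simp
  qed
  then show ?thesis unfolding cspan1_def by blast
qed

definition ph :: "complex ^ 'm \<Rightarrow> complex" where
  "ph x = (\<Sum>k\<in>UNIV. of_real (wt k) * (cnj (zvec p lab $ k) * x $ k))"

lemma ph_H: "ph (Hmat p lab *v v) = 0"
proof -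
  have "ph (Hmat p lab *v v) = (\<Sum>k\<in>UNIV. of_real (wt k) * Lap lab (\<lambda>j. cnj (zvec p lab $ j) * v $ j) k)"
    unfolding ph_def H_apply
    by (intro sum.cong refl) (simp add: mult.assoc[symmetric] z_cnj mult.commute[of "cnj _"])
  also have "\<dots> = 0" by (rule Lap_mean)
  finally show ?thesis .
qed

lemma ph_z: "ph (zvec p lab) = of_real Wt"
  unfolding ph_def Wt_def by (simp add: z_cnj mult.commute[of "cnj _"])

lemma ph_add: "ph (a + b) = ph a + ph b"
  unfolding ph_def by (simp add: algebra_simps sum.distrib)

lemma ph_scale: "ph (c *s a) = c * ph a"
  unfolding ph_def by (simp add: algebra_simps sum_distrib_left)

lemma ph_diff: "ph (a - b) = ph a - ph b"
  unfolding ph_def by (simp add: algebra_simps sum_subtractf)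

definition G :: "complex ^ 'm \<Rightarrow> complex ^ 'm" where
  "G v = Hmat p lab *v v + ph v *s zvec p lab"

lemma G_linear: "linear G"
proof (rule linearI)
  fix a b :: "complex ^ 'm" and r :: real
  show "G (a + b) = G a + G b"
    unfolding G_def ph_add by (simp add: matrix_vector_right_distrib vector_sadd_rdistrib)
  have rs: "r *\<^sub>R v = complex_of_real r *s v" for v :: "complex ^ 'm"
  proof (rule vec_eq_iff[THEN iffD2], intro allI)
    fix i
    show "(r *\<^sub>R v) $ i = (complex_of_real r *s v) $ i"
      by (subst vector_scaleR_component) (simp add: scaleR_conv_of_real)
  qed
  have "Hmat p lab *v (complex_of_real r *s a) = complex_of_real r *s (Hmat p lab *v a)"
    by (simp add: vec_eq_iff matrix_vector_mult_def sum_distrib_left algebra_simps)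
  then show "G (r *\<^sub>R a) = r *\<^sub>R G a"
    unfolding G_def rs ph_scale by (simp add: vec_eq_iff algebra_simps)
qed

lemma colspace_iff:
  assumes conn: "\<forall>k l. (k, l) \<in> Rl\<^sup>*"
  shows "x \<in> colspace (Hmat p lab) \<longleftrightarrow> ph x = 0"
proof
  assume "x \<in> colspace (Hmat p lab)"
  then show "ph x = 0" unfolding colspace_def using ph_H by auto
next
  assume px: "ph x = 0"
  have phG: "ph (G v) = ph v * of_real Wt" for v
    unfolding G_def ph_add ph_scale ph_H ph_z by simp
  have G0: "v = 0" if "G v = 0" for v
  proof -
    have "ph v * of_real Wt = 0" using phG[of v] that by (simp add: ph_def)
    then have pv: "ph v = 0" using Wt_pos by simp
    then have "Hmat p lab *v v = 0" using that unfolding G_def by simp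
    then obtain c where c: "v = c *s zvec p lab" using kernel_span[OF conn] unfolding cspan1_def by blast
    then have "c * of_real Wt = 0" using pv ph_z ph_scale by simp
    then have "c = 0" using Wt_pos by simp
    then show ?thesis using c by simp
  qed
  have "inj G"
  proof (rule injI)
    fix a b assume "G a = G b"
    then have "G (a - b) = 0" using linear_diff[OF G_linear] by simp
    then show "a = b" using G0[of "a - b"] by simp
  qed
  then have "surj G" using linear_injective_imp_surjective[OF G_linear] by simp
  then obtain v where v: "x = G v" by (metis surjD)
  then have "ph v = 0" using phG[of v] px Wt_pos by simp
  then have "x = Hmat p lab *v v" using v unfolding G_def by simp
  then show "x \<in> colspace (Hmat p lab)" unfolding colspace_def by blast
qed

lemma bl_comp: "bounded_linear (\<lambda>v::complex ^ 'm. a * v $ k)"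
  by (rule bounded_linear_compose[OF bounded_linear_mult_right bounded_linear_vec_nth])

lemma y_deriv:
  assumes sol: "is_solution (Hmat p lab) zh t0" and t: "t \<ge> t0"
  shows "((\<lambda>t. cnj (zvec p lab $ k) * zh t $ k) has_vector_derivative
           Lap lab (\<lambda>j. cnj (zvec p lab $ j) * zh t $ j) k) (at t within {t0..})"
proof -
  have d: "(zh has_vector_derivative Hmat p lab *v zh t) (at t within {t0..})"
    using sol t unfolding is_solution_def by blast
  have "((\<lambda>t. cnj (zvec p lab $ k) * zh t $ k) has_vector_derivative
           cnj (zvec p lab $ k) * (Hmat p lab *v zh t) $ k) (at t within {t0..})"
    by (rule bounded_linear.has_vector_derivative[OF bl_comp d])
  moreover have "cnj (zvec p lab $ k) * (Hmat p lab *v zh t) $ k = Lap lab (\<lambda>j. cnj (zvec p lab $ j) * zh t $ j) k"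
    unfolding H_apply by (simp add: mult.assoc[symmetric] z_cnj mult.commute[of "cnj _"])
  ultimately show ?thesis by simp
qed

lemma ph_bl: "bounded_linear ph"
proof -
  have "bounded_linear (\<lambda>v. \<Sum>k\<in>UNIV. (of_real (wt k) * cnj (zvec p lab $ k)) * v $ k)"
    by (intro bounded_linear_sum bl_comp)
  moreover have "(\<lambda>v. \<Sum>k\<in>UNIV. (of_real (wt k) * cnj (zvec p lab $ k)) * v $ k) = ph"
    unfolding ph_def by (simp add: fun_eq_iff mult.assoc)
  ultimately show ?thesis by simp
qed

lemma ph_const:
  assumes sol: "is_solution (Hmat p lab) zh t0" and t: "t \<ge> t0"
  shows "ph (zh t) = ph (zh t0)"
proof (rule deriv_zero_const[OF _ t])
  fix s assume "s \<ge> t0"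
  then have d: "(zh has_vector_derivative Hmat p lab *v zh s) (at s within {t0..})"
    using sol unfolding is_solution_def by blast
  show "((\<lambda>t. ph (zh t)) has_vector_derivative 0) (at s within {t0..})"
    using bounded_linear.has_vector_derivative[OF ph_bl d] ph_H by simp
qed

lemma En_shift: "En (\<lambda>j. f j - c) = En f"
  unfolding En_def by simp

lemma Lap_shift: "Lap lab (\<lambda>j. f j - c) k = Lap lab f k"
  unfolding Lap_def by simp

lemma wt_le1: "wt k \<le> 1"
  unfolding wt_def using card_nbrs_pos[of k] by simp

lemma wt_ge: "1 \<le> real CARD('m) * wt k"
proof -
  have "real (card (nbrs lab k)) \<le> real CARD('m)" by (simp add: card_mono)
  then have "real (card (nbrs lab k)) * wt k \<le> real CARD('m) * wt k"
    using wt_pos[of k] by (intro mult_right_mono) auto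
  then show ?thesis using wt_card[of k] by (simp add: mult.commute)
qed

lemma converge:
  assumes conn: "\<forall>k l. (k, l) \<in> Rl\<^sup>*" and sol: "is_solution (Hmat p lab) zh t0"
  shows "exp_conv zh t0 ((ph (zh t0) / of_real Wt) *s zvec p lab)"
proof -
  let ?z = "zvec p lab"
  define c where "c = ph (zh t0) / of_real Wt"
  define y where "y t k = cnj (?z $ k) * zh t $ k" for t k
  define V where "V t = (\<Sum>k\<in>UNIV. wt k * (cmod (y t k - c))\<^sup>2)" for t
  define Q where "Q t = (\<Sum>k\<in>UNIV. (cmod (y t k - c))\<^sup>2)" for t
  obtain C where C: "C \<ge> 0" "\<And>f k l. (cmod (f k - f l))\<^sup>2 \<le> C * En f"
    using unif_bound[OF conn] by blast
  define K where "K = Wt * C"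
  have K: "K \<ge> 0" unfolding K_def using C(1) Wt_pos by simp
  define lam where "lam = 1 / (K + 1)"
  have lam: "lam > 0" unfolding lam_def using K by simp
  have mean_y: "mean (y t) = c" if "t \<ge> t0" for t
    using ph_const[OF sol that] unfolding mean_def c_def ph_def y_def by simp
  have VK: "V t \<le> K * En (y t)" if "t \<ge> t0" for t
    using mean_bound[OF C, of "y t"] mean_y[OF that] unfolding V_def K_def by simp
  have Vd: "(V has_real_derivative - En (y t)) (at t within {t0..})" if "t \<ge> t0" for t
  proof -
    have dk: "((\<lambda>t. wt k * (cmod (y t k - c))\<^sup>2) has_real_derivative
              wt k * (2 * ((y t k - c) \<bullet> Lap lab (y t) k))) (at t within {t0..})" for k
    proof -
      have "((\<lambda>t. y t k) has_vector_derivative Lap lab (y t) k) (at t within {t0..})"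
        using y_deriv[OF sol that, of k] unfolding y_def by simp
      from inner_sq_deriv[OF this, of c] show ?thesis
        unfolding power2_norm_eq_inner by (rule DERIV_cmult)
    qed
    have "(V has_real_derivative (\<Sum>k\<in>UNIV. wt k * (2 * ((y t k - c) \<bullet> Lap lab (y t) k)))) (at t within {t0..})"
      unfolding V_def[abs_def] by (rule DERIV_sum) (use dk in auto)
    moreover have "(\<Sum>k\<in>UNIV. wt k * (2 * ((y t k - c) \<bullet> Lap lab (y t) k))) = - En (y t)"
      using energy_id[of "\<lambda>j. y t j - c"] unfolding Lap_shift En_shift .
    ultimately show ?thesis by simp
  qed
  define g where "g t = exp (lam * (t - t0)) * V t" for t
  have gd: "(g has_real_derivative (exp (lam * (t - t0)) * lam * V t + exp (lam * (t - t0)) * (- En (y t))))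
            (at t within {t0..})" if "t \<ge> t0" for t
  proof -
    have e: "((\<lambda>t. exp (lam * (t - t0))) has_real_derivative exp (lam * (t - t0)) * lam) (at t within {t0..})"
      by (auto intro!: derivative_eq_intros)
    show ?thesis unfolding g_def[abs_def] by (rule DERIV_cong[OF DERIV_mult[OF e Vd[OF that]]]) (simp add: algebra_simps)
  qed
  have gn: "exp (lam * (t - t0)) * lam * V t + exp (lam * (t - t0)) * (- En (y t)) \<le> 0" if "t \<ge> t0" for t
  proof -
    have "lam * V t \<le> lam * (K * En (y t))" using VK[OF that] lam by (intro mult_left_mono) auto
    also have "\<dots> = (K / (K + 1)) * En (y t)" unfolding lam_def by simp
    also have "\<dots> \<le> 1 * En (y t)" using K En_nonneg[of "y t"] by (intro mult_right_mono) auto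
    finally have "lam * V t - En (y t) \<le> 0" by simp
    then have "exp (lam * (t - t0)) * (lam * V t - En (y t)) \<le> 0" by (simp add: mult_nonneg_nonpos)
    then show ?thesis by (simp add: algebra_simps)
  qed
  have gdec: "g t \<le> g t0" if "t \<ge> t0" for t
    by (rule deriv_nonpos_decr[OF gd gn that])
  have Vdec: "V t \<le> exp (- lam * (t - t0)) * V t0" if "t \<ge> t0" for t
  proof -
    have "exp (lam * (t - t0)) * V t \<le> V t0" using gdec[OF that] unfolding g_def by simp
    then have "exp (- lam * (t - t0)) * (exp (lam * (t - t0)) * V t) \<le> exp (- lam * (t - t0)) * V t0"
      by (intro mult_left_mono) auto
    then show ?thesis by (simp add: mult.assoc[symmetric] exp_add[symmetric])
  qed
  have VQ: "V t \<le> Q t" for t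
    unfolding V_def Q_def using wt_le1 wt_pos by (intro sum_mono mult_left_le_one_le) (auto intro: less_imp_le)
  have QV: "Q t \<le> real CARD('m) * V t" for t
  proof -
    have "Q t \<le> (\<Sum>k\<in>UNIV. (real CARD('m) * wt k) * (cmod (y t k - c))\<^sup>2)"
      unfolding Q_def using wt_ge by (intro sum_mono) (simp add: mult_le_cancel_right1)
    then show ?thesis unfolding V_def by (simp add: sum_distrib_left mult.assoc)
  qed
  have normQ: "(norm (zh t - c *s ?z))\<^sup>2 = Q t" for t
  proof -
    have "cmod ((zh t - c *s ?z) $ k) = cmod (y t k - c)" for k
    proof -
      have "(zh t - c *s ?z) $ k = ?z $ k * (y t k - c)"
        unfolding y_def using x_from_y[of "zh t" k] by (simp add: algebra_simps)
      then show ?thesis using z_unit[of k] by (simp add: norm_mult)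
    qed
    then show ?thesis unfolding norm_vec_sq Q_def by simp
  qed
  define M where "M = real CARD('m)"
  have M: "M > 0" unfolding M_def by simp
  have main: "norm (zh t - c *s ?z) \<le> sqrt M * exp (- (lam / 2) * (t - t0)) * norm (zh t0 - c *s ?z)"
    if t: "t \<ge> t0" for t
  proof -
    have "(norm (zh t - c *s ?z))\<^sup>2 \<le> M * V t" using QV normQ unfolding M_def by simp
    also have "\<dots> \<le> M * (exp (- lam * (t - t0)) * V t0)" using Vdec[OF t] M by (intro mult_left_mono) auto
    also have "\<dots> \<le> M * (exp (- lam * (t - t0)) * Q t0)" using VQ[of t0] M by (intro mult_left_mono) auto
    also have "\<dots> = (sqrt M * exp (- (lam / 2) * (t - t0)) * norm (zh t0 - c *s ?z))\<^sup>2"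
    proof -
      have e2: "(exp (- (lam / 2) * (t - t0)))\<^sup>2 = exp (- lam * (t - t0))"
        by (simp add: power2_eq_square exp_add[symmetric])
      have s2: "(sqrt M)\<^sup>2 = M" using M by simp
      show ?thesis unfolding power_mult_distrib s2 e2 normQ by (simp only: mult.assoc)
    qed
    finally have sq: "(norm (zh t - c *s ?z))\<^sup>2 \<le> (sqrt M * exp (- (lam / 2) * (t - t0)) * norm (zh t0 - c *s ?z))\<^sup>2" .
    have nn: "0 \<le> sqrt M * exp (- (lam / 2) * (t - t0)) * norm (zh t0 - c *s ?z)"
      using M by simp
    show ?thesis using power2_le_imp_le[OF sq nn] .
  qed
  have "sqrt M > 0" "lam / 2 > 0" using M lam by auto
  then show ?thesis unfolding exp_conv_def c_def[symmetric] using main by blast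
qed

lemma limit_coeff:
  assumes conn: "\<forall>k l. (k, l) \<in> Rl\<^sup>*" and sol: "is_solution (Hmat p lab) zh t0"
    and ec: "exp_conv zh t0 zinf"
  shows "ph zinf = ph (zh t0)"
proof -
  from ec obtain \<tau> \<sigma> where s: "\<sigma> > 0" and b:
    "\<forall>t\<ge>t0. norm (zh t - zinf) \<le> \<tau> * exp (- \<sigma> * (t - t0)) * norm (zh t0 - zinf)"
    unfolding exp_conv_def by blast
  obtain B where B: "B > 0" "\<And>v. norm (ph v) \<le> norm v * B"
    using bounded_linear.pos_bounded[OF ph_bl] by blast
  have "\<forall>t\<ge>t0. norm (ph (zh t0) - ph zinf) \<le> (\<tau> * norm (zh t0 - zinf) * B) * exp (- \<sigma> * (t - t0))"
  proof (intro allI impI)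
    fix t assume t: "t \<ge> t0"
    have "norm (ph (zh t0) - ph zinf) = norm (ph (zh t - zinf))"
      using ph_const[OF sol t] by (simp add: ph_diff)
    also have "\<dots> \<le> norm (zh t - zinf) * B" by (rule B(2))
    also have "\<dots> \<le> (\<tau> * exp (- \<sigma> * (t - t0)) * norm (zh t0 - zinf)) * B"
      using b t B(1) by (intro mult_right_mono) auto
    finally show "norm (ph (zh t0) - ph zinf) \<le> (\<tau> * norm (zh t0 - zinf) * B) * exp (- \<sigma> * (t - t0))"
      by (simp add: algebra_simps)
  qed
  from decay_zero[OF norm_ge_zero s this] show ?thesis by simp
qed

end

theorem theorem3:
  fixes N :: nat and p :: "nat \<Rightarrow> complex" and S :: "(nat \<times> nat \<times> nat) set"
    and lab :: "'m::finite \<Rightarrow> vtx \<times> vtx"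
  assumes distinct_pos: "inj_on p {1..N}"
    and S_agents: "S \<subseteq> {(u, w, v). u \<in> {1..N} \<and> w \<in> {1..N} \<and> v \<in> {1..N}
                                   \<and> u \<noteq> w \<and> u \<noteq> v \<and> w \<noteq> v}"
    and S_sym: "\<forall>u w v. (u, w, v) \<in> S \<longleftrightarrow> (u, v, w) \<in> S"
    and standing: "\<forall>u. \<forall>a\<in>{x. \<exists>y. (u, x, y) \<in> S}. \<forall>b\<in>{x. \<exists>y. (u, x, y) \<in> S}.
                      (a, b) \<in> {(x, y). (u, x, y) \<in> S}\<^sup>*"
    and connected: "\<forall>a\<in>{1..N}. \<forall>b\<in>{1..N}. (a, b) \<in> (commE S)\<^sup>*"
    and lab_bij: "bij_betw lab UNIV (Ebar S)"
  shows "((\<forall>zh t0. is_solution (Hmat p lab) zh t0 \<longrightarrow>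
              (\<exists>zinf \<in> cspan1 (zvec p lab). exp_conv zh t0 zinf))
          \<longleftrightarrow> has_oriented_spanning_tree (Vbar S) (Ebar S))
       \<and> (has_oriented_spanning_tree (Vbar S) (Ebar S) \<longrightarrow>
          (\<forall>zh t0 zinf. is_solution (Hmat p lab) zh t0 \<and> zinf \<in> cspan1 (zvec p lab)
              \<and> exp_conv zh t0 zinf \<longrightarrow>
              (zinf \<in> cspan1 (zvec p lab) - {0} \<longleftrightarrow> zh t0 \<notin> colspace (Hmat p lab))))"
proof -
  interpret thm_setting N p S lab
    using distinct_pos S_agents S_sym lab_bij by unfold_locales
  have A: "(\<forall>zh t0. is_solution (Hmat p lab) zh t0 \<longrightarrow>
              (\<exists>zinf \<in> cspan1 (zvec p lab). exp_conv zh t0 zinf))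
          \<longleftrightarrow> has_oriented_spanning_tree (Vbar S) (Ebar S)"
  proof
    assume all: "\<forall>zh t0. is_solution (Hmat p lab) zh t0 \<longrightarrow>
              (\<exists>zinf \<in> cspan1 (zvec p lab). exp_conv zh t0 zinf)"
    show "has_oriented_spanning_tree (Vbar S) (Ebar S)"
    proof (rule ccontr)
      assume "\<not> has_oriented_spanning_tree (Vbar S) (Ebar S)"
      from no_tree_solution[OF this] obtain x where x: "Hmat p lab *v x = 0" "x \<notin> cspan1 (zvec p lab)"
        by blast
      have "is_solution (Hmat p lab) (\<lambda>t. x) 0"
        unfolding is_solution_def using x(1) by (auto intro: derivative_eq_intros)
      then obtain zinf where "zinf \<in> cspan1 (zvec p lab)" "exp_conv (\<lambda>t. x) 0 zinf"
        using all by blast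
      then show False using exp_conv_const x(2) by blast
    qed
  next
    assume tree: "has_oriented_spanning_tree (Vbar S) (Ebar S)"
    have conn: "\<forall>k l. (k, l) \<in> Rl\<^sup>*" by (rule tree_conn[OF tree])
    show "\<forall>zh t0. is_solution (Hmat p lab) zh t0 \<longrightarrow>
              (\<exists>zinf \<in> cspan1 (zvec p lab). exp_conv zh t0 zinf)"
    proof (intro allI impI)
      fix zh t0 assume sol: "is_solution (Hmat p lab) zh t0"
      have "(ph (zh t0) / of_real Wt) *s zvec p lab \<in> cspan1 (zvec p lab)"
        unfolding cspan1_def by blast
      then show "\<exists>zinf \<in> cspan1 (zvec p lab). exp_conv zh t0 zinf"
        using converge[OF conn sol] by blast
    qed
  qed
  have B: "has_oriented_spanning_tree (Vbar S) (Ebar S) \<longrightarrow>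
          (\<forall>zh t0 zinf. is_solution (Hmat p lab) zh t0 \<and> zinf \<in> cspan1 (zvec p lab)
              \<and> exp_conv zh t0 zinf \<longrightarrow>
              (zinf \<in> cspan1 (zvec p lab) - {0} \<longleftrightarrow> zh t0 \<notin> colspace (Hmat p lab)))"
  proof (intro impI allI)
    fix zh t0 zinf
    assume tree: "has_oriented_spanning_tree (Vbar S) (Ebar S)"
      and h: "is_solution (Hmat p lab) zh t0 \<and> zinf \<in> cspan1 (zvec p lab) \<and> exp_conv zh t0 zinf"
    have conn: "\<forall>k l. (k, l) \<in> Rl\<^sup>*" by (rule tree_conn[OF tree])
    from h obtain c where c: "zinf = c *s zvec p lab" unfolding cspan1_def by blast
    have "ph zinf = ph (zh t0)" using limit_coeff[OF conn] h by blast
    then have pc: "c * of_real Wt = ph (zh t0)" using c ph_scale ph_z by simp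
    obtain k0 :: 'm where True by blast
    have "zinf \<noteq> 0 \<longleftrightarrow> c \<noteq> 0"
    proof
      assume "zinf \<noteq> 0" then show "c \<noteq> 0" using c by auto
    next
      assume "c \<noteq> 0"
      then have "zinf $ k0 \<noteq> 0" using c z_ne[of k0] by simp
      then show "zinf \<noteq> 0" by auto
    qed
    also have "\<dots> \<longleftrightarrow> ph (zh t0) \<noteq> 0" using pc Wt_pos by auto
    also have "\<dots> \<longleftrightarrow> zh t0 \<notin> colspace (Hmat p lab)" using colspace_iff[OF conn] by blast
    finally show "zinf \<in> cspan1 (zvec p lab) - {0} \<longleftrightarrow> zh t0 \<notin> colspace (Hmat p lab)"
      using h by blast
  qed
  show ?thesis using A B by blast
qed

end
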